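(* Let $M$ and $M'$ be two stable matchings in an instance $I$ of SPA-S, and let $M^\land$ be the assignment defined from $M,M'$ in the context. If a lecturer $l_k$ is undersubscribed in $M^\land$, then $l_k$ is undersubscribed in both $M$ and $M'$.
   Context: An instance $I$ of SPA-S consists of a finite set $\mathcal{S}$ of students, a finite set $\mathcal{P}$ of projects and a finite set $\mathcal{L}$ of lecturers. Each student $s_i$ ranks a subset $A_i\subseteq\mathcal{P}$ (its acceptable projects) in strict order. Each project is offered by exactly one lecturer; lecturer $l_k$ offers a nonempty set $P_k\subseteq\mathcal{P}$, the $P_k$ partitioning $\mathcal{P}$. Each lecturer $l_k$ ranks in strict order the students who find at least one project of $P_k$ acceptable. Projects have capacities $c_j\in\mathbb{Z}^+$, lecturers have capacities $d_k\in\mathbb{Z}^+$ with $\max\{c_j:p_j\in P_k\}\le d_k\le\sum\{c_j:p_j\in P_k\}$. A pair $(s_i,p_j)$, $p_j$ offered by $l_k$, is acceptable if $p_j\in A_i$ and $s_i$ is on $l_k$'s list. A matching $M$ is a set of acceptable pairs with each student in at most one pair, $|M(p_j)|\le c_j$, $|M(l_k)|\le d_k$, where for an assignment $M$ (a set of acceptable pairs), $M(s_i)$, $M(p_j)$, $M(l_k)$ denote the project of $s_i$, the students assigned to $p_j$, and the students assigned to projects of $l_k$. Undersubscribed/full means fewer than/exactly capacity many assigned students. An acceptable pair $(s_i,p_j)\notin M$ ($p_j$ offered by $l_k$) blocks $M$ if ($s_i$ is unassigned or prefers $p_j$ to $M(s_i)$) and one of: (P1) $p_j$ and $l_k$ undersubscribed;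 (P2) $p_j$ undersubscribed, $l_k$ full, $s_i\in M(l_k)$; (P3) $p_j$ undersubscribed, $l_k$ full, $l_k$ prefers $s_i$ to the worst student of $M(l_k)$; (P4) $p_j$ full and $l_k$ prefers $s_i$ to the worst student of $M(p_j)$. $M$ is stable if it has no blocking pair. Given stable matchings $M,M'$, $M^\land$ is the assignment in which each student unassigned in both $M$ and $M'$ is unassigned, each student assigned to the same project in both is assigned to that project, and every other student is assigned to the better (in her preference) of her projects in $M$ and $M'$. *)

theory Defs
  imports Main
begin

text \<open>An SPA-S instance. Students of type 's, projects 'p, lecturers 'l.
  Student preference lists and lecturer preference lists are distinct lists
  (earlier = more preferred).\<close>

record ('s, 'p, 'l) spa =
  students  :: "'s set"
  projects  :: "'p set"
  lecturers :: "'l set"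
  spref     :: "'s \<Rightarrow> 'p list"
  lect      :: "'p \<Rightarrow> 'l"
  lpref     :: "'l \<Rightarrow> 's list"
  pcap      :: "'p \<Rightarrow> nat"
  lcap      :: "'l \<Rightarrow> nat"

definition offers :: "('s, 'p, 'l) spa \<Rightarrow> 'l \<Rightarrow> 'p set" where
  "offers I l = {p \<in> projects I. lect I p = l}"

definition spa_instance :: "('s, 'p, 'l) spa \<Rightarrow> bool" where
  "spa_instance I \<longleftrightarrow>
     finite (students I) \<and> finite (projects I) \<and> finite (lecturers I) \<and>
     (\<forall>s \<in> students I. distinct (spref I s) \<and> set (spref I s) \<subseteq> projects I) \<and>
     (\<forall>p \<in> projects I. lect I p \<in> lecturers I) \<and>
     (\<forall>l \<in> lecturers I. offers I l \<noteq> {}) \<and>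
     (\<forall>l \<in> lecturers I. distinct (lpref I l) \<and>
        set (lpref I l) = {s \<in> students I. \<exists>p \<in> set (spref I s). lect I p = l}) \<and>
     (\<forall>p \<in> projects I. pcap I p > 0) \<and>
     (\<forall>l \<in> lecturers I. Max (pcap I ` offers I l) \<le> lcap I l \<and>
                         lcap I l \<le> (\<Sum>p \<in> offers I l. pcap I p))"

definition pos :: "'a list \<Rightarrow> 'a \<Rightarrow> nat" where
  "pos xs x = (LEAST i. i < length xs \<and> xs ! i = x)"

definition acceptable :: "('s, 'p, 'l) spa \<Rightarrow> 's \<Rightarrow> 'p \<Rightarrow> bool" where
  "acceptable I s p \<longleftrightarrow> s \<in> students I \<and> p \<in> projects I \<and>
     p \<in> set (spref I s) \<and> s \<in> set (lpref I (lect I p))"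

definition sprefers :: "('s, 'p, 'l) spa \<Rightarrow> 's \<Rightarrow> 'p \<Rightarrow> 'p \<Rightarrow> bool" where
  "sprefers I s p q \<longleftrightarrow> p \<in> set (spref I s) \<and> q \<in> set (spref I s) \<and>
     pos (spref I s) p < pos (spref I s) q"

definition lprefers :: "('s, 'p, 'l) spa \<Rightarrow> 'l \<Rightarrow> 's \<Rightarrow> 's \<Rightarrow> bool" where
  "lprefers I l s t \<longleftrightarrow> s \<in> set (lpref I l) \<and> t \<in> set (lpref I l) \<and>
     pos (lpref I l) s < pos (lpref I l) t"

definition worst :: "('s, 'p, 'l) spa \<Rightarrow> 'l \<Rightarrow> 's set \<Rightarrow> 's" where
  "worst I l X = (ARG_MAX (\<lambda>t. pos (lpref I l) t) t. t \<in> X)"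

type_synonym ('s, 'p) assignment = "('s \<times> 'p) set"

definition assigned_p :: "('s, 'p) assignment \<Rightarrow> 'p \<Rightarrow> 's set" where
  "assigned_p M p = {s. (s, p) \<in> M}"

definition assigned_l :: "('s, 'p, 'l) spa \<Rightarrow> ('s, 'p) assignment \<Rightarrow> 'l \<Rightarrow> 's set" where
  "assigned_l I M l = {s. \<exists>p. (s, p) \<in> M \<and> lect I p = l}"

definition s_assigned :: "('s, 'p) assignment \<Rightarrow> 's \<Rightarrow> bool" where
  "s_assigned M s \<longleftrightarrow> (\<exists>p. (s, p) \<in> M)"

definition proj_of :: "('s, 'p) assignment \<Rightarrow> 's \<Rightarrow> 'p" where
  "proj_of M s = (THE p. (s, p) \<in> M)"

definition matching :: "('s, 'p, 'l) spa \<Rightarrow> ('s, 'p) assignment \<Rightarrow> bool" where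
  "matching I M \<longleftrightarrow>
     (\<forall>(s, p) \<in> M. acceptable I s p) \<and>
     (\<forall>s p q. (s, p) \<in> M \<longrightarrow> (s, q) \<in> M \<longrightarrow> p = q) \<and>
     (\<forall>p \<in> projects I. card (assigned_p M p) \<le> pcap I p) \<and>
     (\<forall>l \<in> lecturers I. card (assigned_l I M l) \<le> lcap I l)"

definition p_undersub :: "('s, 'p, 'l) spa \<Rightarrow> ('s, 'p) assignment \<Rightarrow> 'p \<Rightarrow> bool" where
  "p_undersub I M p \<longleftrightarrow> card (assigned_p M p) < pcap I p"

definition p_full :: "('s, 'p, 'l) spa \<Rightarrow> ('s, 'p) assignment \<Rightarrow> 'p \<Rightarrow> bool" where
  "p_full I M p \<longleftrightarrow> card (assigned_p M p) = pcap I p"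

definition l_undersub :: "('s, 'p, 'l) spa \<Rightarrow> ('s, 'p) assignment \<Rightarrow> 'l \<Rightarrow> bool" where
  "l_undersub I M l \<longleftrightarrow> card (assigned_l I M l) < lcap I l"

definition l_full :: "('s, 'p, 'l) spa \<Rightarrow> ('s, 'p) assignment \<Rightarrow> 'l \<Rightarrow> bool" where
  "l_full I M l \<longleftrightarrow> card (assigned_l I M l) = lcap I l"

definition blocking_pair :: "('s, 'p, 'l) spa \<Rightarrow> ('s, 'p) assignment \<Rightarrow> 's \<Rightarrow> 'p \<Rightarrow> bool" where
  "blocking_pair I M s p \<longleftrightarrow>
     (let l = lect I p in
       acceptable I s p \<and> (s, p) \<notin> M \<and>
       (\<not> s_assigned M s \<or> sprefers I s p (proj_of M s)) \<and>
       ((p_undersub I M p \<and> l_undersub I M l) \<or>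
        (p_undersub I M p \<and> l_full I M l \<and> s \<in> assigned_l I M l) \<or>
        (p_undersub I M p \<and> l_full I M l \<and>
           lprefers I l s (worst I l (assigned_l I M l))) \<or>
        (p_full I M p \<and> lprefers I l s (worst I l (assigned_p M p)))))"

definition stable :: "('s, 'p, 'l) spa \<Rightarrow> ('s, 'p) assignment \<Rightarrow> bool" where
  "stable I M \<longleftrightarrow> matching I M \<and> (\<forall>s p. \<not> blocking_pair I M s p)"

text \<open>M-wedge: each student gets the better of her projects in M and M'
  (the common project if equal; if assigned in only one of them, that project;
  unassigned if unassigned in both).\<close>
definition meet :: "('s, 'p, 'l) spa \<Rightarrow> ('s, 'p) assignment \<Rightarrow> ('s, 'p) assignment
                     \<Rightarrow> ('s, 'p) assignment" where
  "meet I M M' =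
     {(s, p). ((s, p) \<in> M \<and> (\<forall>q. (s, q) \<in> M' \<longrightarrow> q = p \<or> sprefers I s p q)) \<or>
              ((s, p) \<in> M' \<and> (\<forall>q. (s, q) \<in> M \<longrightarrow> q = p \<or> sprefers I s p q))}"

end

theory Submission
  imports Defs
begin

lemma pos_in:
  assumes "x \<in> set xs"
  shows "pos xs x < length xs \<and> xs ! pos xs x = x"
proof -
  obtain i where "i < length xs" "xs ! i = x" using assms by (auto simp: in_set_conv_nth)
  then show ?thesis unfolding pos_def using LeastI[of "\<lambda>i. i < length xs \<and> xs ! i = x" i] by blast
qed

lemma pos_inj:
  assumes "x \<in> set xs" "y \<in> set xs" "pos xs x = pos xs y"
  shows "x = y"
  using pos_in[OF assms(1)] pos_in[OF assms(2)] assms(3) by metis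

lemma pos_total:
  assumes "x \<in> set xs" "y \<in> set xs" "x \<noteq> y"
  shows "pos xs x < pos xs y \<or> pos xs y < pos xs x"
  using pos_inj[OF assms(1,2)] assms(3) by (meson linorder_neqE_nat)

lemma sprefers_total:
  assumes "p \<in> set (spref I s)" "q \<in> set (spref I s)" "p \<noteq> q"
  shows "sprefers I s p q \<or> sprefers I s q p"
  using pos_total[OF assms] assms unfolding sprefers_def by auto

lemma sprefers_irrefl: "\<not> sprefers I s p p"
  unfolding sprefers_def by auto

lemma sprefers_asym: "sprefers I s p q \<Longrightarrow> \<not> sprefers I s q p"
  unfolding sprefers_def by auto

lemma worst_props:
  assumes "finite S" "S \<noteq> {}"
  shows "worst I l S \<in> S \<and> (\<forall>t\<in>S. pos (lpref I l) t \<le> pos (lpref I l) (worst I l S))"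
proof -
  obtain k where k: "k \<in> S" using assms by auto
  have "\<forall>y. y \<in> S \<longrightarrow> pos (lpref I l) y < Max ((pos (lpref I l)) ` S) + 1"
    using assms by (simp add: le_imp_less_Suc)
  from arg_max_nat_lemma[of "\<lambda>t. t \<in> S", OF k this]
  show ?thesis unfolding worst_def by blast
qed

lemma m_acc: "matching I M \<Longrightarrow> (s, p) \<in> M \<Longrightarrow> acceptable I s p"
  unfolding matching_def by auto

lemma m_uniq: "matching I M \<Longrightarrow> (s, p) \<in> M \<Longrightarrow> (s, q) \<in> M \<Longrightarrow> p = q"
  unfolding matching_def by blast

lemma m_proj: "matching I M \<Longrightarrow> (s, p) \<in> M \<Longrightarrow> proj_of M s = p"
  unfolding proj_of_def using m_uniq by (metis the_equality)

lemma m_pcap: "matching I M \<Longrightarrow> p \<in> projects I \<Longrightarrow> card (assigned_p M p) \<le> pcap I p"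
  unfolding matching_def by auto

lemma m_lcap: "matching I M \<Longrightarrow> l \<in> lecturers I \<Longrightarrow> card (assigned_l I M l) \<le> lcap I l"
  unfolding matching_def by auto

lemma fin_p: "matching I M \<Longrightarrow> finite (students I) \<Longrightarrow> finite (S \<inter> assigned_p M p)"
  "matching I M \<Longrightarrow> finite (students I) \<Longrightarrow> finite (assigned_p M p)"
proof -
  assume a: "matching I M" "finite (students I)"
  have "assigned_p M p \<subseteq> students I" using m_acc[OF a(1)] unfolding assigned_p_def acceptable_def by auto
  then show "finite (assigned_p M p)" "finite (S \<inter> assigned_p M p)" using a(2) finite_subset by auto
qed

lemma fin_l: "matching I M \<Longrightarrow> finite (students I) \<Longrightarrow> finite (S \<inter> assigned_l I M l)"
  "matching I M \<Longrightarrow> finite (students I) \<Longrightarrow> finite (assigned_l I M l)"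
proof -
  assume a: "matching I M" "finite (students I)"
  have "assigned_l I M l \<subseteq> students I" using m_acc[OF a(1)] unfolding assigned_l_def acceptable_def by auto
  then show "finite (assigned_l I M l)" "finite (S \<inter> assigned_l I M l)" using a(2) finite_subset by auto
qed

definition imp :: "('s, 'p, 'l) spa \<Rightarrow> ('s, 'p) assignment \<Rightarrow> ('s, 'p) assignment \<Rightarrow> 's set" where
  "imp I M M' = {s. \<exists>q. (s, q) \<in> M' \<and> (\<forall>p. (s, p) \<in> M \<longrightarrow> sprefers I s q p)}"

lemma all_better:
  assumes "finite S" "S \<noteq> {}" "S \<subseteq> set (lpref I l)" "s \<in> set (lpref I l)" "s \<notin> S"
    "\<not> lprefers I l s (worst I l S)"
  shows "\<forall>t\<in>S. lprefers I l t s"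
proof
  fix t assume t: "t \<in> S"
  note w = worst_props[OF assms(1,2), of I l]
  have "worst I l S \<noteq> s" using w assms(5) by auto
  then have "pos (lpref I l) (worst I l S) < pos (lpref I l) s"
    using pos_total[of "worst I l S" "lpref I l" s] w assms(3,4,6) unfolding lprefers_def by auto
  then show "lprefers I l t s" using w t assms(3,4) unfolding lprefers_def by fastforce
qed

lemma beats_worst:
  assumes "finite S" "u \<in> S" "S \<subseteq> set (lpref I l)" "t \<in> set (lpref I l)"
    "pos (lpref I l) t < pos (lpref I l) u"
  shows "lprefers I l t (worst I l S)"
proof -
  note w = worst_props[OF assms(1), of I l]
  have "S \<noteq> {}" using assms(2) by auto
  with w assms show ?thesis unfolding lprefers_def by fastforce
qed

lemma acc_lpref_p: "matching I M \<Longrightarrow> assigned_p M q \<subseteq> set (lpref I (lect I q))"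
  using m_acc unfolding assigned_p_def acceptable_def by fastforce

lemma acc_lpref_l: "matching I M \<Longrightarrow> assigned_l I M l \<subseteq> set (lpref I l)"
  using m_acc unfolding assigned_l_def acceptable_def by fastforce


lemma inst_facts:
  assumes "spa_instance I"
  shows "finite (students I)" "finite (lecturers I)" "finite (projects I)"
    "\<And>p. p \<in> projects I \<Longrightarrow> lect I p \<in> lecturers I"
    "\<And>p. p \<in> projects I \<Longrightarrow> pcap I p > 0"
  using assms unfolding spa_instance_def by auto

lemma NB:
  assumes inst: "spa_instance I" and stM: "stable I M" and mM': "matching I M'"
    and sX: "s \<in> imp I M M'" and sq: "(s, q) \<in> M'"
  shows "(card (assigned_p M q) = pcap I q \<and> (\<forall>t\<in>assigned_p M q. lprefers I (lect I q) t s)) \<or>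
         (s \<notin> assigned_l I M (lect I q) \<and> card (assigned_l I M (lect I q)) = lcap I (lect I q) \<and>
          (\<forall>t\<in>assigned_l I M (lect I q). lprefers I (lect I q) t s))"
proof -
  define l where "l = lect I q"
  have mM: "matching I M" using stM unfolding stable_def by auto
  have nb: "\<not> blocking_pair I M s q" using stM unfolding stable_def by auto
  have acc: "acceptable I s q" using m_acc[OF mM' sq] .
  then have qP: "q \<in> projects I" and sL: "s \<in> set (lpref I l)" unfolding acceptable_def l_def by auto
  have lL: "l \<in> lecturers I" using inst_facts(4)[OF inst qP] l_def by simp
  have fs: "finite (students I)" using inst_facts(1)[OF inst] .
  obtain q' where q': "(s, q') \<in> M'" "\<forall>p. (s, p) \<in> M \<longrightarrow> sprefers I s q' p" using sX unfolding imp_def by auto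
  have qq: "q' = q" using m_uniq[OF mM' q'(1) sq] .
  have notM: "(s, q) \<notin> M" using q' qq sprefers_irrefl by metis
  have pref: "\<not> s_assigned M s \<or> sprefers I s q (proj_of M s)"
    using q' qq m_proj[OF mM] unfolding s_assigned_def by metis
  have sMq: "s \<notin> assigned_p M q" using notM unfolding assigned_p_def by auto
  have c1: "card (assigned_p M q) \<le> pcap I q" using m_pcap[OF mM qP] .
  have c2: "card (assigned_l I M l) \<le> lcap I l" using m_lcap[OF mM lL] .
  have nb': "\<not> ((p_undersub I M q \<and> l_undersub I M l) \<or>
        (p_undersub I M q \<and> l_full I M l \<and> s \<in> assigned_l I M l) \<or>
        (p_undersub I M q \<and> l_full I M l \<and>
           lprefers I l s (worst I l (assigned_l I M l))) \<or>
        (p_full I M q \<and> lprefers I l s (worst I l (assigned_p M q))))"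
    using nb acc notM pref unfolding blocking_pair_def Let_def l_def by blast
  show ?thesis
  proof (cases "card (assigned_p M q) = pcap I q")
    case True
    then have "\<not> lprefers I l s (worst I l (assigned_p M q))" using nb' unfolding p_full_def by auto
    moreover have "assigned_p M q \<noteq> {}" using True inst_facts(5)[OF inst qP] by auto
    ultimately have "\<forall>t\<in>assigned_p M q. lprefers I l t s"
      using all_better[OF fin_p(2)[OF mM fs] _ _ sL sMq] acc_lpref_p[OF mM, of q] l_def by auto
    then show ?thesis using True l_def by auto
  next
    case False
    then have pu: "p_undersub I M q" using c1 unfolding p_undersub_def by auto
    then have lf: "card (assigned_l I M l) = lcap I l" using nb' c2 unfolding l_undersub_def by auto
    then have lf': "l_full I M l" unfolding l_full_def by auto
    have sML: "s \<notin> assigned_l I M l" using nb' pu lf' by auto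
    have nl: "\<not> lprefers I l s (worst I l (assigned_l I M l))" using nb' pu lf' by auto
    have "s \<in> assigned_l I M' l" using sq l_def unfolding assigned_l_def by auto
    then have "card (assigned_l I M' l) > 0" using fin_l(2)[OF mM' fs] card_gt_0_iff by blast
    then have "lcap I l > 0" using m_lcap[OF mM' lL] by auto
    then have "assigned_l I M l \<noteq> {}" using lf by auto
    then have "\<forall>t\<in>assigned_l I M l. lprefers I l t s"
      using all_better[OF fin_l(2)[OF mM fs] _ acc_lpref_l[OF mM] sL sML nl] by auto
    then show ?thesis using lf sML l_def by auto
  qed
qed


lemma PX:
  assumes inst: "spa_instance I" and stM': "stable I M'" and mM: "matching I M"
    and sq: "(s, q) \<in> M'" and full: "card (assigned_p M q) = pcap I q"
    and better: "\<forall>t\<in>assigned_p M q. lprefers I (lect I q) t s"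
  shows "card (imp I M M' \<inter> assigned_p M' q) \<le> card (imp I M M' \<inter> assigned_p M q)"
proof -
  define l where "l = lect I q"
  define X where "X = imp I M M'"
  have mM': "matching I M'" using stM' unfolding stable_def by auto
  have fs: "finite (students I)" using inst_facts(1)[OF inst] .
  have accs: "acceptable I s q" using m_acc[OF mM' sq] .
  then have qP: "q \<in> projects I" and sL: "s \<in> set (lpref I l)" unfolding acceptable_def l_def by auto
  have lL: "l \<in> lecturers I" using inst_facts(4)[OF inst qP] l_def by simp
  have sM'q: "s \<in> assigned_p M' q" using sq unfolding assigned_p_def by auto
  have sM'l: "s \<in> assigned_l I M' l" using sq l_def unfolding assigned_l_def by auto
  have sub: "assigned_p M q - assigned_p M' q \<subseteq> X"
  proof
    fix t assume t: "t \<in> assigned_p M q - assigned_p M' q"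
    then have tq: "(t, q) \<in> M" "(t, q) \<notin> M'" unfolding assigned_p_def by auto
    show "t \<in> X"
    proof (rule ccontr)
      assume tX: "t \<notin> X"
      have acc: "acceptable I t q" using m_acc[OF mM tq(1)] .
      have pref: "\<not> s_assigned M' t \<or> sprefers I t q (proj_of M' t)"
      proof (cases "s_assigned M' t")
        case True
        then obtain r where r: "(t, r) \<in> M'" unfolding s_assigned_def by auto
        have rq: "r \<noteq> q" using r tq by auto
        have "\<not> sprefers I t r q"
        proof
          assume "sprefers I t r q"
          then have "\<forall>p. (t, p) \<in> M \<longrightarrow> sprefers I t r p" using m_uniq[OF mM tq(1)] by auto
          then show False using tX r unfolding X_def imp_def by auto
        qed
        moreover have "r \<in> set (spref I t)" "q \<in> set (spref I t)"
          using m_acc[OF mM' r] acc unfolding acceptable_def by auto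
        ultimately have "sprefers I t q r" using sprefers_total rq by metis
        then show ?thesis using m_proj[OF mM' r] by simp
      qed simp
      have tb: "lprefers I l t s" using better t l_def by auto
      then have tL: "t \<in> set (lpref I l)" and tpos: "pos (lpref I l) t < pos (lpref I l) s"
        unfolding lprefers_def by auto
      have "blocking_pair I M' t q"
      proof (cases "card (assigned_p M' q) = pcap I q")
        case True
        have "lprefers I l t (worst I l (assigned_p M' q))"
          using beats_worst[OF fin_p(2)[OF mM' fs] sM'q _ tL tpos] acc_lpref_p[OF mM', of q] l_def by auto
        then show ?thesis using True acc tq pref unfolding blocking_pair_def Let_def p_full_def l_def by auto
      next
        case False
        then have pu: "p_undersub I M' q" using m_pcap[OF mM' qP] unfolding p_undersub_def by auto
        show ?thesis
        proof (cases "l_undersub I M' l")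
          case True
          then show ?thesis using pu acc tq pref unfolding blocking_pair_def Let_def l_def by auto
        next
          case False
          then have lf: "l_full I M' l" using m_lcap[OF mM' lL] unfolding l_undersub_def l_full_def by auto
          have "lprefers I l t (worst I l (assigned_l I M' l))"
            using beats_worst[OF fin_l(2)[OF mM' fs] sM'l acc_lpref_l[OF mM'] tL tpos] .
          then show ?thesis using pu lf acc tq pref unfolding blocking_pair_def Let_def l_def by auto
        qed
      qed
      then show False using stM' unfolding stable_def by auto
    qed
  qed
  have s1: "X \<inter> assigned_p M' q \<subseteq> assigned_p M' q - assigned_p M q"
    unfolding X_def imp_def assigned_p_def using m_uniq[OF mM'] sprefers_irrefl by fastforce
  have s2: "assigned_p M q - assigned_p M' q \<subseteq> X \<inter> assigned_p M q" using sub by auto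
  have f1: "finite (assigned_p M q)" "finite (assigned_p M' q)" using fin_p(2)[OF mM fs] fin_p(2)[OF mM' fs] by auto
  have "card (X \<inter> assigned_p M' q) \<le> card (assigned_p M' q - assigned_p M q)"
    using card_mono[OF _ s1] f1 by auto
  also have "\<dots> = card (assigned_p M' q) - card (assigned_p M' q \<inter> assigned_p M q)"
    using card_Diff_subset_Int f1 by (meson finite_Int)
  also have "\<dots> \<le> card (assigned_p M q) - card (assigned_p M q \<inter> assigned_p M' q)"
    using m_pcap[OF mM' qP] full by (simp add: Int_commute)
  also have "\<dots> = card (assigned_p M q - assigned_p M' q)"
    using card_Diff_subset_Int f1 by (metis finite_Int)
  also have "\<dots> \<le> card (X \<inter> assigned_p M q)"
    using card_mono[OF _ s2] f1 by auto
  finally show ?thesis unfolding X_def .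
qed


lemma PYtype:
  assumes inst: "spa_instance I" and stM': "stable I M'" and mM: "matching I M"
    and tp: "(t, p) \<in> M" and tY: "t \<in> imp I M' M"
    and sl: "s \<in> assigned_l I M' (lect I p)" and ts: "lprefers I (lect I p) t s"
  shows "card (assigned_p M' p) = pcap I p \<and> (\<forall>u\<in>assigned_p M' p. lprefers I (lect I p) u t)"
proof -
  define l where "l = lect I p"
  have mM': "matching I M'" using stM' unfolding stable_def by auto
  have nb: "\<not> blocking_pair I M' t p" using stM' unfolding stable_def by auto
  have fs: "finite (students I)" using inst_facts(1)[OF inst] .
  have acc: "acceptable I t p" using m_acc[OF mM tp] .
  then have pP: "p \<in> projects I" and tL: "t \<in> set (lpref I l)" unfolding acceptable_def l_def by auto
  have lL: "l \<in> lecturers I" using inst_facts(4)[OF inst pP] l_def by simp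
  obtain p' where p': "(t, p') \<in> M" "\<forall>q. (t, q) \<in> M' \<longrightarrow> sprefers I t p' q" using tY unfolding imp_def by auto
  have pp: "p' = p" using m_uniq[OF mM p'(1) tp] .
  have notM': "(t, p) \<notin> M'" using p' pp sprefers_irrefl by metis
  have pref: "\<not> s_assigned M' t \<or> sprefers I t p (proj_of M' t)"
    using p' pp m_proj[OF mM'] unfolding s_assigned_def by metis
  have tM'p: "t \<notin> assigned_p M' p" using notM' unfolding assigned_p_def by auto
  have tpos: "pos (lpref I l) t < pos (lpref I l) s" using ts l_def unfolding lprefers_def by auto
  have full: "card (assigned_p M' p) = pcap I p"
  proof (rule ccontr)
    assume "card (assigned_p M' p) \<noteq> pcap I p"
    then have pu: "p_undersub I M' p" using m_pcap[OF mM' pP] unfolding p_undersub_def by auto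
    have "blocking_pair I M' t p"
    proof (cases "l_undersub I M' l")
      case True
      then show ?thesis using pu acc notM' pref unfolding blocking_pair_def Let_def l_def by auto
    next
      case False
      then have lf: "l_full I M' l" using m_lcap[OF mM' lL] unfolding l_undersub_def l_full_def by auto
      have "lprefers I l t (worst I l (assigned_l I M' l))"
        using beats_worst[OF fin_l(2)[OF mM' fs] _ acc_lpref_l[OF mM'] tL tpos] sl l_def by auto
      then show ?thesis using pu lf acc notM' pref unfolding blocking_pair_def Let_def l_def by auto
    qed
    then show False using nb by simp
  qed
  then have "\<not> lprefers I l t (worst I l (assigned_p M' p))"
    using nb acc notM' pref unfolding blocking_pair_def Let_def p_full_def l_def by auto
  moreover have "assigned_p M' p \<noteq> {}" using full inst_facts(5)[OF inst pP] by auto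
  ultimately have "\<forall>u\<in>assigned_p M' p. lprefers I l u t"
    using all_better[OF fin_p(2)[OF mM' fs] _ _ tL tM'p] acc_lpref_p[OF mM', of p] l_def by auto
  then show ?thesis using full l_def by auto
qed

lemma decomp:
  assumes mM: "matching I M" and fs: "finite (students I)" and fp: "finite (projects I)"
  shows "card (S \<inter> assigned_l I M l) = (\<Sum>q\<in>offers I l. card (S \<inter> assigned_p M q))"
proof -
  have eq: "S \<inter> assigned_l I M l = (\<Union>q\<in>offers I l. S \<inter> assigned_p M q)"
    using m_acc[OF mM] unfolding assigned_l_def assigned_p_def offers_def acceptable_def by fastforce
  have fo: "finite (offers I l)" using fp unfolding offers_def by auto
  have "card (\<Union>q\<in>offers I l. S \<inter> assigned_p M q) = (\<Sum>q\<in>offers I l. card (S \<inter> assigned_p M q))"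
    apply (rule card_UN_disjoint[OF fo])
    using fin_p(1)[OF mM fs] apply blast
    using m_uniq[OF mM] unfolding assigned_p_def by blast
  then show ?thesis using eq by simp
qed

definition common :: "('s, 'p, 'l) spa \<Rightarrow> ('s, 'p) assignment \<Rightarrow> ('s, 'p) assignment \<Rightarrow> 'l \<Rightarrow> 's set" where
  "common I M M' l = {s. \<exists>p. (s, p) \<in> M \<and> (s, p) \<in> M' \<and> lect I p = l}"

lemma common_sym: "common I M M' l = common I M' M l"
  unfolding common_def by auto

lemma partition:
  assumes mM: "matching I M" and mM': "matching I M'" and fs: "finite (students I)"
  shows "card (assigned_l I M l) = card (common I M M' l) + card (imp I M M' \<inter> assigned_l I M l)
           + card (imp I M' M \<inter> assigned_l I M l)"
proof -
  let ?C = "common I M M' l" and ?X = "imp I M M' \<inter> assigned_l I M l" and ?Y = "imp I M' M \<inter> assigned_l I M l"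
  have eq: "assigned_l I M l = ?C \<union> ?X \<union> ?Y"
  proof
    show "assigned_l I M l \<subseteq> ?C \<union> ?X \<union> ?Y"
    proof
      fix s assume "s \<in> assigned_l I M l"
      then obtain p where sp: "(s, p) \<in> M" "lect I p = l" unfolding assigned_l_def by auto
      show "s \<in> ?C \<union> ?X \<union> ?Y"
      proof (cases "\<exists>r. (s, r) \<in> M'")
        case True
        then obtain r where r: "(s, r) \<in> M'" by auto
        show ?thesis
        proof (cases "r = p")
          case True
          then show ?thesis using sp r unfolding common_def by auto
        next
          case False
          have "r \<in> set (spref I s)" "p \<in> set (spref I s)"
            using m_acc[OF mM' r] m_acc[OF mM sp(1)] unfolding acceptable_def by auto
          then have "sprefers I s r p \<or> sprefers I s p r" using sprefers_total False by metis
          then show ?thesis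
            using sp r m_uniq[OF mM sp(1)] m_uniq[OF mM' r] unfolding imp_def assigned_l_def by blast
        qed
      next
        case False
        then show ?thesis using sp unfolding imp_def assigned_l_def by blast
      qed
    qed
    show "?C \<union> ?X \<union> ?Y \<subseteq> assigned_l I M l"
      unfolding common_def assigned_l_def by auto
  qed
  have d1: "?C \<inter> ?X = {}"
    unfolding common_def imp_def using m_uniq[OF mM'] sprefers_irrefl by fastforce
  have d2: "(?C \<union> ?X) \<inter> ?Y = {}"
  proof (rule ccontr)
    assume "(?C \<union> ?X) \<inter> ?Y \<noteq> {}"
    then obtain s where s: "s \<in> ?C \<union> ?X" "s \<in> ?Y" by blast
    from s(2) obtain p where p: "(s, p) \<in> M" "\<forall>q. (s, q) \<in> M' \<longrightarrow> sprefers I s p q"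
      unfolding imp_def by blast
    show False
    proof (cases "s \<in> ?C")
      case True
      then obtain p' where "(s, p') \<in> M" "(s, p') \<in> M'" unfolding common_def by blast
      then show False using p m_uniq[OF mM] sprefers_irrefl by metis
    next
      case False
      then have "s \<in> imp I M M'" using s(1) by blast
      then obtain q where "(s, q) \<in> M'" "\<forall>p. (s, p) \<in> M \<longrightarrow> sprefers I s q p"
        unfolding imp_def by blast
      then show False using p sprefers_asym by metis
    qed
  qed
  have fC: "finite ?C" using finite_subset[OF _ fin_l(2)[OF mM fs]] eq by blast
  have fX: "finite ?X" "finite ?Y" using fin_l(1)[OF mM fs] by auto
  have "card (assigned_l I M l) = card (?C \<union> ?X) + card ?Y"
    using eq card_Un_disjoint[OF _ fX(2) d2] fC fX by auto
  also have "card (?C \<union> ?X) = card ?C + card ?X" using card_Un_disjoint[OF fC fX(1) d1] .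
  finally show ?thesis .
qed


lemma LEC:
  assumes inst: "spa_instance I" and stM: "stable I M" and stM': "stable I M'" and lL: "l \<in> lecturers I"
  shows "card (imp I M M' \<inter> assigned_l I M' l) \<le> card (imp I M M' \<inter> assigned_l I M l)"
proof -
  define X where "X = imp I M M'"
  define Y where "Y = imp I M' M"
  have mM: "matching I M" using stM unfolding stable_def by auto
  have mM': "matching I M'" using stM' unfolding stable_def by auto
  have fs: "finite (students I)" and fp: "finite (projects I)" using inst_facts[OF inst] by auto
  show ?thesis
  proof (cases "\<forall>s q. s \<in> X \<longrightarrow> (s, q) \<in> M' \<longrightarrow> lect I q = l \<longrightarrow>
      (card (assigned_p M q) = pcap I q \<and> (\<forall>t\<in>assigned_p M q. lprefers I (lect I q) t s))")
    case True
    have "\<forall>q\<in>offers I l. card (X \<inter> assigned_p M' q) \<le> card (X \<inter> assigned_p M q)"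
    proof
      fix q assume q: "q \<in> offers I l"
      show "card (X \<inter> assigned_p M' q) \<le> card (X \<inter> assigned_p M q)"
      proof (cases "X \<inter> assigned_p M' q = {}")
        case True then show ?thesis by simp
      next
        case False
        then obtain s where s: "s \<in> X" "(s, q) \<in> M'" unfolding assigned_p_def by auto
        have "lect I q = l" using q unfolding offers_def by auto
        then have "card (assigned_p M q) = pcap I q" "\<forall>t\<in>assigned_p M q. lprefers I (lect I q) t s"
          using True s by auto
        from PX[OF inst stM' mM s(2) this] show ?thesis unfolding X_def .
      qed
    qed
    then have "(\<Sum>q\<in>offers I l. card (X \<inter> assigned_p M' q)) \<le> (\<Sum>q\<in>offers I l. card (X \<inter> assigned_p M q))"
      by (simp add: sum_mono)
    then show ?thesis using decomp[OF mM fs fp] decomp[OF mM' fs fp] unfolding X_def by metis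
  next
    case False
    then obtain s q where sq: "s \<in> X" "(s, q) \<in> M'" "lect I q = l"
      and nI: "\<not> (card (assigned_p M q) = pcap I q \<and> (\<forall>t\<in>assigned_p M q. lprefers I (lect I q) t s))"
      by blast
    have II: "card (assigned_l I M l) = lcap I l" "\<forall>t\<in>assigned_l I M l. lprefers I l t s"
      using NB[OF inst stM mM' sq(1)[unfolded X_def] sq(2)] nI sq(3) by auto
    have sl: "s \<in> assigned_l I M' l" using sq unfolding assigned_l_def by auto
    have "\<forall>p\<in>offers I l. card (Y \<inter> assigned_p M p) \<le> card (Y \<inter> assigned_p M' p)"
    proof
      fix p assume p: "p \<in> offers I l"
      then have pl: "lect I p = l" unfolding offers_def by auto
      show "card (Y \<inter> assigned_p M p) \<le> card (Y \<inter> assigned_p M' p)"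
      proof (cases "Y \<inter> assigned_p M p = {}")
        case True then show ?thesis by simp
      next
        case False
        then obtain t where t: "t \<in> Y" "(t, p) \<in> M" unfolding assigned_p_def by auto
        have "t \<in> assigned_l I M l" using t pl unfolding assigned_l_def by auto
        then have ts: "lprefers I (lect I p) t s" using II pl by auto
        have ty: "card (assigned_p M' p) = pcap I p" "\<forall>u\<in>assigned_p M' p. lprefers I (lect I p) u t"
          using PYtype[OF inst stM' mM t(2) t(1)[unfolded Y_def] _ ts] sl pl by auto
        from PX[OF inst stM mM' t(2) ty] show ?thesis unfolding Y_def .
      qed
    qed
    then have "(\<Sum>p\<in>offers I l. card (Y \<inter> assigned_p M p)) \<le> (\<Sum>p\<in>offers I l. card (Y \<inter> assigned_p M' p))"
      by (simp add: sum_mono)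
    then have YY: "card (Y \<inter> assigned_l I M l) \<le> card (Y \<inter> assigned_l I M' l)"
      using decomp[OF mM fs fp] decomp[OF mM' fs fp] by metis
    have P1: "card (assigned_l I M l) = card (common I M M' l) + card (X \<inter> assigned_l I M l) + card (Y \<inter> assigned_l I M l)"
      using partition[OF mM mM' fs] unfolding X_def Y_def .
    have P2: "card (assigned_l I M' l) = card (common I M M' l) + card (Y \<inter> assigned_l I M' l) + card (X \<inter> assigned_l I M' l)"
      using partition[OF mM' mM fs] common_sym unfolding X_def Y_def by metis
    have "card (assigned_l I M' l) \<le> lcap I l" using m_lcap[OF mM' lL] .
    then show ?thesis using P1 P2 II(1) YY unfolding X_def by linarith
  qed
qed


lemma meet_sym: "meet I M M' = meet I M' M"
  unfolding meet_def by auto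

lemma main_card:
  assumes inst: "spa_instance I" and stM: "stable I M" and stM': "stable I M'" and lL: "l \<in> lecturers I"
  shows "card (assigned_l I M l) \<le> card (assigned_l I (meet I M M') l)"
proof -
  define X where "X = imp I M M'"
  define f where "f = (\<lambda>l. card (X \<inter> assigned_l I M' l))"
  define g where "g = (\<lambda>l. card (X \<inter> assigned_l I M l))"
  have mM: "matching I M" using stM unfolding stable_def by auto
  have mM': "matching I M'" using stM' unfolding stable_def by auto
  have fs: "finite (students I)" and fL: "finite (lecturers I)" using inst_facts[OF inst] by auto
  have fg: "\<forall>k\<in>lecturers I. f k \<le> g k" using LEC[OF inst stM stM'] unfolding f_def g_def X_def by auto
  have XS: "X \<subseteq> students I" using m_acc[OF mM'] unfolding X_def imp_def acceptable_def by fastforce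
  then have fX: "finite X" using fs finite_subset by auto
  have "X \<subseteq> (\<Union>k\<in>lecturers I. X \<inter> assigned_l I M' k)"
  proof
    fix s assume s: "s \<in> X"
    then obtain q where q: "(s, q) \<in> M'" unfolding X_def imp_def by auto
    then have "q \<in> projects I" using m_acc[OF mM'] unfolding acceptable_def by auto
    then have "lect I q \<in> lecturers I" using inst_facts(4)[OF inst] by auto
    then show "s \<in> (\<Union>k\<in>lecturers I. X \<inter> assigned_l I M' k)" using s q unfolding assigned_l_def by auto
  qed
  then have "card X \<le> card (\<Union>k\<in>lecturers I. X \<inter> assigned_l I M' k)"
    using card_mono fin_l(1)[OF mM' fs] fL by (metis finite_UN_I)
  also have "\<dots> \<le> (\<Sum>k\<in>lecturers I. f k)" unfolding f_def using card_UN_le[OF fL] by blast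
  finally have h1: "card X \<le> (\<Sum>k\<in>lecturers I. f k)" .
  have "(\<Sum>k\<in>lecturers I. g k) = card (\<Union>k\<in>lecturers I. X \<inter> assigned_l I M k)"
    unfolding g_def
    apply (rule card_UN_disjoint[OF fL, symmetric])
    using fin_l(1)[OF mM fs] apply blast
    using m_uniq[OF mM] unfolding assigned_l_def by blast
  also have "\<dots> \<le> card X" using card_mono[OF fX] by (metis (no_types, lifting) UN_least inf_le1)
  finally have h2: "(\<Sum>k\<in>lecturers I. g k) \<le> card X" .
  have fgl: "f l = g l"
  proof (rule ccontr)
    assume "f l \<noteq> g l"
    then have "f l < g l" using fg lL by force
    then have "(\<Sum>k\<in>lecturers I. f k) < (\<Sum>k\<in>lecturers I. g k)"
      using sum_strict_mono_ex1[OF fL fg] lL by blast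
    then show False using h1 h2 by linarith
  qed
  define A where "A = assigned_l I M l - X"
  define B where "B = X \<inter> assigned_l I M' l"
  have AB: "A \<union> B \<subseteq> assigned_l I (meet I M M') l"
  proof
    fix s assume "s \<in> A \<union> B"
    then show "s \<in> assigned_l I (meet I M M') l"
    proof
      assume "s \<in> A"
      then obtain p where p: "(s, p) \<in> M" "lect I p = l" "s \<notin> X" unfolding A_def assigned_l_def by auto
      have "\<forall>q. (s, q) \<in> M' \<longrightarrow> q = p \<or> sprefers I s p q"
      proof (intro allI impI)
        fix q assume q: "(s, q) \<in> M'"
        show "q = p \<or> sprefers I s p q"
        proof (cases "q = p")
          case False
          have "q \<in> set (spref I s)" "p \<in> set (spref I s)"
            using m_acc[OF mM' q] m_acc[OF mM p(1)] unfolding acceptable_def by auto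
          then have "sprefers I s q p \<or> sprefers I s p q" using sprefers_total False by metis
          moreover have "\<not> sprefers I s q p"
          proof
            assume "sprefers I s q p"
            then have "s \<in> X" using q m_uniq[OF mM p(1)] unfolding X_def imp_def by auto
            then show False using p by simp
          qed
          ultimately show ?thesis by simp
        qed simp
      qed
      then have "(s, p) \<in> meet I M M'" using p unfolding meet_def by auto
      then show ?thesis using p unfolding assigned_l_def by auto
    next
      assume "s \<in> B"
      then obtain q where q: "(s, q) \<in> M'" "lect I q = l" "s \<in> X" unfolding B_def assigned_l_def by auto
      then obtain q' where q': "(s, q') \<in> M'" "\<forall>p. (s, p) \<in> M \<longrightarrow> sprefers I s q' p"
        unfolding X_def imp_def by auto
      have "q' = q" using m_uniq[OF mM' q'(1) q(1)] .
      then have "(s, q) \<in> meet I M M'" using q q' unfolding meet_def by auto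
      then show ?thesis using q unfolding assigned_l_def by auto
    qed
  qed
  have meetS: "assigned_l I (meet I M M') l \<subseteq> students I"
    using m_acc[OF mM] m_acc[OF mM'] unfolding assigned_l_def meet_def acceptable_def by fastforce
  then have fmeet: "finite (assigned_l I (meet I M M') l)" using fs finite_subset by auto
  have fA: "finite A" "finite B" unfolding A_def B_def using fin_l[OF mM fs] fin_l[OF mM' fs] by auto
  have dAB: "A \<inter> B = {}" unfolding A_def B_def by auto
  have "card (A \<union> B) = card A + card B" using card_Un_disjoint[OF fA dAB] .
  moreover have "card A = card (assigned_l I M l) - g l"
    unfolding A_def g_def using card_Diff_subset_Int fin_l[OF mM fs] by (metis Int_commute finite_Int)
  moreover have "g l \<le> card (assigned_l I M l)"
    unfolding g_def using card_mono fin_l[OF mM fs] by (metis inf_le2)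
  moreover have "card (A \<union> B) \<le> card (assigned_l I (meet I M M') l)" using card_mono[OF fmeet AB] .
  ultimately show ?thesis using fgl unfolding B_def f_def by linarith
qed

theorem lemma5:
  fixes I :: "('s, 'p, 'l) spa" and M M' :: "('s, 'p) assignment" and l :: 'l
  assumes "spa_instance I"
    and "stable I M" and "stable I M'"
    and "l \<in> lecturers I"
    and "l_undersub I (meet I M M') l"
  shows "l_undersub I M l \<and> l_undersub I M' l"
proof -
  have "card (assigned_l I M l) \<le> card (assigned_l I (meet I M M') l)"
    using main_card[OF assms(1-4)] .
  moreover have "card (assigned_l I M' l) \<le> card (assigned_l I (meet I M M') l)"
    using main_card[OF assms(1,3,2,4)] meet_sym by metis
  ultimately show ?thesis using assms(5) unfolding l_undersub_def by linarith
qed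

end
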